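(* Let $p>1$ and let $\{X_\alpha\}$ be an arbitrary family of positive real-valued random variables. Then there exists a random variable $Y$ with $\mathbb{E}|Y|^p<\infty$ such that $X_\alpha\le_{\mathrm{icx}}Y$ for all $\alpha$ if and only if there exists a random variable $Z$ with $\mathbb{E}|Z|^p<\infty$ such that $X_\alpha\le_{\mathrm{st}}Z$ for all $\alpha$.
   Context: "Positive" means nonnegative; the random variables need not be on a common probability space. $X_1\le_{\mathrm{st}}X_2$ means $\mathbb{P}(X_1>t)\le\mathbb{P}(X_2>t)$ for all $t\in\mathbb{R}$ (equivalently $\mathbb{E}\phi(X_1)\le\mathbb{E}\phi(X_2)$ for all increasing measurable $\phi\ge 0$). For positive $X_1,X_2$, $X_1\le_{\mathrm{icx}}X_2$ means $\mathbb{E}\phi(X_1)\le\mathbb{E}\phi(X_2)$ for all increasing convex $\phi:\mathbb{R}_+\to\mathbb{R}_+$, equivalently $\mathbb{E}(X_1-t)_+\le\mathbb{E}(X_2-t)_+$ for all $t\ge0$. *)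

theory Defs
  imports "HOL-Probability.Probability"
begin

text \<open>A real-valued random variable is represented by its law: a probability
  measure on the Borel sets of the real line.  All notions involved (moments,
  stochastic order, increasing convex order) depend only on laws, and the
  variables need not live on a common probability space.\<close>

definition real_law :: "real measure \<Rightarrow> bool" where
  "real_law \<mu> \<longleftrightarrow> prob_space \<mu> \<and> sets \<mu> = sets borel"

definition positive_law :: "real measure \<Rightarrow> bool" where
  "positive_law \<mu> \<longleftrightarrow> real_law \<mu> \<and> (AE x in \<mu>. 0 \<le> x)"

definition finite_pth_moment :: "real \<Rightarrow> real measure \<Rightarrow> bool" where
  "finite_pth_moment p \<mu> \<longleftrightarrow> (\<integral>\<^sup>+ x. ennreal (\<bar>x\<bar> powr p) \<partial>\<mu>) < \<infinity>"

definition st_le :: "real measure \<Rightarrow> real measure \<Rightarrow> bool" where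
  "st_le \<mu> \<nu> \<longleftrightarrow> (\<forall>t::real. measure \<mu> {t<..} \<le> measure \<nu> {t<..})"

definition icx_le :: "real measure \<Rightarrow> real measure \<Rightarrow> bool" where
  "icx_le \<mu> \<nu> \<longleftrightarrow>
     (\<forall>\<phi>::real \<Rightarrow> real. mono_on {0..} \<phi> \<and> convex_on {0..} \<phi> \<and> (\<forall>x\<ge>0. 0 \<le> \<phi> x) \<longrightarrow>
        (\<integral>\<^sup>+ x. ennreal (\<phi> x) \<partial>\<mu>) \<le> (\<integral>\<^sup>+ x. ennreal (\<phi> x) \<partial>\<nu>))"

end

theory Submission
  imports Defs
begin

lemma upset_cases:
  fixes \<psi> :: "real \<Rightarrow> real"
  assumes "mono \<psi>"
  shows "{x. s < \<psi> x} = {} \<or> {x. s < \<psi> x} = UNIV \<or> (\<exists>t. {x. s < \<psi> x} = {t<..}) \<or> (\<exists>t. {x. s < \<psi> x} = {t..})"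
proof -
  let ?U = "{x. s < \<psi> x}"
  have up: "x \<in> ?U \<Longrightarrow> x \<le> y \<Longrightarrow> y \<in> ?U" for x y
    using assms by (auto dest: monoD[of _ x y])
  show ?thesis
  proof (cases "?U = {} \<or> ?U = UNIV")
    case True then show ?thesis by blast
  next
    case False
    then obtain x0 y0 where x0: "x0 \<notin> ?U" and y0: "y0 \<in> ?U" by blast
    have lb: "x0 < y" if "y \<in> ?U" for y
      using up[of y x0] that x0 by force
    define t where "t = Inf ?U"
    have bdd: "bdd_below ?U" using lb by (meson bdd_belowI less_imp_le)
    have ge: "t \<le> y" if "y \<in> ?U" for y unfolding t_def by (rule cInf_lower[OF that bdd])
    have gt: "y \<in> ?U" if ty: "t < y" for y
    proof -
      have "?U \<noteq> {}" using y0 by blast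
      then obtain z where "z \<in> ?U" "z < y" using ty cInf_lessD[of ?U y] unfolding t_def
        by blast
      then show ?thesis using up by auto
    qed
    show ?thesis
    proof (cases "t \<in> ?U")
      case True
      then have "?U = {t..}" using ge gt by (auto simp: le_less)
      then show ?thesis by blast
    next
      case False
      then have "?U = {t<..}" using ge gt by (auto simp: le_less)
      then show ?thesis by blast
    qed
  qed
qed

lemma st_le_Ioi:
  assumes "real_law \<mu>" "real_law \<nu>" "st_le \<mu> \<nu>"
  shows "emeasure \<mu> {t<..} \<le> emeasure \<nu> {t<..}"
proof -
  interpret m: prob_space \<mu> using assms(1) by (simp add: real_law_def)
  interpret n: prob_space \<nu> using assms(2) by (simp add: real_law_def)
  have s: "{t<..} \<in> sets \<mu>" "{t<..} \<in> sets \<nu>" using assms(1,2) by (auto simp: real_law_def)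
  show ?thesis using assms(3) s by (simp add: st_le_def m.emeasure_eq_measure n.emeasure_eq_measure)
qed

lemma Ici_approx:
  fixes t :: real
  defines "A \<equiv> \<lambda>i. {t - 1 / real (Suc i)<..}"
  shows "decseq A" "(\<Inter>i. A i) = {t..}" "{t..} \<subseteq> A i"
proof -
  have p: "0 < 1 / (1 + real i)" for i by (simp add: add_pos_nonneg)
  show "{t..} \<subseteq> A i" using p[of i] by (auto simp: A_def) (smt (verit) p)
  show "decseq A"
  proof (rule decseq_SucI)
    fix i
    have "1 / real (Suc (Suc i)) \<le> 1 / real (Suc i)" by (simp add: frac_le)
    then show "A (Suc i) \<subseteq> A i" by (auto simp: A_def)
  qed
  show "(\<Inter>i. A i) = {t..}"
  proof
    show "{t..} \<subseteq> (\<Inter>i. A i)" using p by (auto simp: A_def) (smt (verit) p)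
    show "(\<Inter>i. A i) \<subseteq> {t..}"
    proof
      fix x assume x: "x \<in> (\<Inter>i. A i)"
      show "x \<in> {t..}"
      proof (rule ccontr)
        assume "x \<notin> {t..}"
        then have "0 < t - x" by simp
        then obtain n where n: "inverse (real (Suc n)) < t - x" using reals_Archimedean by blast
        from x have "x \<in> A n" by blast
        then have "t - 1 / real (Suc n) < x" by (simp add: A_def)
        with n show False by (simp add: field_simps)
      qed
    qed
  qed
qed

lemma st_le_Ici:
  assumes "real_law \<mu>" "real_law \<nu>" "st_le \<mu> \<nu>"
  shows "emeasure \<mu> {t..} \<le> emeasure \<nu> {t..}"
proof -
  interpret n: prob_space \<nu> using assms(2) by (simp add: real_law_def)
  define A where "A \<equiv> \<lambda>i. {t - 1 / real (Suc i)<..}"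
  have Ap: "decseq A" "(\<Inter>i. A i) = {t..}" "\<And>i. {t..} \<subseteq> A i"
    unfolding A_def by (rule Ici_approx)+
  have sn: "sets \<nu> = sets borel" "sets \<mu> = sets borel" using assms(1,2) by (simp_all add: real_law_def)
  have "range A \<subseteq> sets \<nu>" unfolding sn A_def by auto
  then have lim: "(\<lambda>i. emeasure \<nu> (A i)) \<longlonglongrightarrow> emeasure \<nu> (\<Inter>i. A i)"
    using Ap(1) by (intro Lim_emeasure_decseq) auto
  have le: "emeasure \<mu> {t..} \<le> emeasure \<nu> (A i)" for i
  proof -
    have "emeasure \<mu> {t..} \<le> emeasure \<mu> (A i)"
      by (rule emeasure_mono[OF Ap(3)]) (simp add: sn A_def)
    also have "\<dots> \<le> emeasure \<nu> (A i)" unfolding A_def by (rule st_le_Ioi[OF assms])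
    finally show ?thesis .
  qed
  have "emeasure \<mu> {t..} \<le> emeasure \<nu> (\<Inter>i. A i)"
    by (rule LIMSEQ_le_const[OF lim]) (use le in blast)
  then show ?thesis using Ap(2) by simp
qed

lemma st_le_upset:
  fixes \<psi> :: "real \<Rightarrow> real"
  assumes "real_law \<mu>" "real_law \<nu>" "st_le \<mu> \<nu>" "mono \<psi>"
  shows "emeasure \<mu> {x. s < \<psi> x} \<le> emeasure \<nu> {x. s < \<psi> x}"
proof -
  interpret m: prob_space \<mu> using assms(1) by (simp add: real_law_def)
  interpret n: prob_space \<nu> using assms(2) by (simp add: real_law_def)
  have sp: "space \<mu> = UNIV" "space \<nu> = UNIV"
    using sets_eq_imp_space_eq[of \<mu> borel] sets_eq_imp_space_eq[of \<nu> borel] assms(1,2)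
    by (simp_all add: real_law_def)
  have "emeasure \<mu> UNIV \<le> emeasure \<nu> UNIV" using sp m.emeasure_space_1 n.emeasure_space_1 by simp
  moreover have "emeasure \<mu> {} \<le> emeasure \<nu> {}" by simp
  ultimately show ?thesis
    using upset_cases[OF assms(4), of s] st_le_Ioi[OF assms(1-3)] st_le_Ici[OF assms(1-3)]
    by metis
qed

lemma st_le_nn_integral:
  fixes \<psi> :: "real \<Rightarrow> real"
  assumes "real_law \<mu>" "real_law \<nu>" "st_le \<mu> \<nu>" "mono \<psi>" "\<And>x. 0 \<le> \<psi> x"
  shows "(\<integral>\<^sup>+ x. ennreal (\<psi> x) \<partial>\<mu>) \<le> (\<integral>\<^sup>+ x. ennreal (\<psi> x) \<partial>\<nu>)"
proof -
  have key: "(\<integral>\<^sup>+ x. ennreal (\<psi> x) \<partial>M) = (\<integral>\<^sup>+ s. indicator {0..} s * emeasure M {x. s < \<psi> x} \<partial>lborel)"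
    if M: "real_law M" for M
  proof -
    interpret M: prob_space M using M by (simp add: real_law_def)
    interpret pair_sigma_finite M lborel
      by (simp add: M.sigma_finite_measure_axioms lborel.sigma_finite_measure_axioms pair_sigma_finite.intro)
    have sM: "sets M = sets borel" using M by (simp add: real_law_def)
    have spM: "space M = UNIV" using sets_eq_imp_space_eq[OF sM] by simp
    have psim: "\<psi> \<in> borel_measurable M"
      using borel_measurable_mono[OF assms(4)] measurable_cong_sets[OF sM refl] by blast
    have pf: "(\<lambda>w. \<psi> (fst w)) \<in> borel_measurable (M \<Otimes>\<^sub>M lborel)"
      by (rule measurable_compose[OF measurable_fst psim])
    have "{z \<in> space (M \<Otimes>\<^sub>M lborel). 0 \<le> snd z \<and> snd z < \<psi> (fst z)} \<in> sets (M \<Otimes>\<^sub>M lborel)"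
      using pf by measurable
    then have m2: "(\<lambda>z. indicator {z. 0 \<le> snd z \<and> snd z < \<psi> (fst z)} z :: ennreal) \<in> borel_measurable (M \<Otimes>\<^sub>M lborel)"
      by (intro borel_measurable_indicator') auto
    have eqf: "(\<lambda>(x, s). indicator {0..<\<psi> x} s :: ennreal) = (\<lambda>z. indicator {z. 0 \<le> snd z \<and> snd z < \<psi> (fst z)} z)"
      by (auto simp: indicator_def fun_eq_iff)
    have meas: "(\<lambda>(x, s). indicator {0..<\<psi> x} s :: ennreal) \<in> borel_measurable (M \<Otimes>\<^sub>M lborel)"
      unfolding eqf by (rule m2)
    have "(\<integral>\<^sup>+ x. ennreal (\<psi> x) \<partial>M) = (\<integral>\<^sup>+ x. (\<integral>\<^sup>+ s. indicator {0..<\<psi> x} s \<partial>lborel) \<partial>M)"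
      using assms(5) by (intro nn_integral_cong) simp
    also have "\<dots> = (\<integral>\<^sup>+ s. (\<integral>\<^sup>+ x. indicator {0..<\<psi> x} s \<partial>M) \<partial>lborel)"
      using Fubini'[of "\<lambda>x s. indicator {0..<\<psi> x} s"] meas by simp
    also have "\<dots> = (\<integral>\<^sup>+ s. indicator {0..} s * emeasure M {x. s < \<psi> x} \<partial>lborel)"
    proof (intro nn_integral_cong)
      fix s :: real
      have "(\<integral>\<^sup>+ x. indicator {0..<\<psi> x} s \<partial>M) = (\<integral>\<^sup>+ x. indicator {0..} s * indicator {x. s < \<psi> x} x \<partial>M)"
        by (intro nn_integral_cong) (simp add: indicator_def)
      also have "\<dots> = indicator {0..} s * emeasure M {x. s < \<psi> x}"
      proof -
        have "{x \<in> space M. s < \<psi> x} \<in> sets M"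
          using psim by measurable
        then have "{x. s < \<psi> x} \<in> sets M" using spM by simp
        then show ?thesis by (simp add: nn_integral_cmult)
      qed
      finally show "(\<integral>\<^sup>+ x. indicator {0..<\<psi> x} s \<partial>M) = indicator {0..} s * emeasure M {x. s < \<psi> x}" .
    qed
    finally show ?thesis .
  qed
  show ?thesis
    unfolding key[OF assms(1)] key[OF assms(2)]
    by (intro nn_integral_mono mult_left_mono st_le_upset[OF assms(1-4)]) simp
qed


lemma dir_st_icx:
  fixes X :: "'i \<Rightarrow> real measure"
  assumes p: "p \<ge> 0" and X: "\<And>\<alpha>. positive_law (X \<alpha>)"
    and Z: "real_law Z" "finite_pth_moment p Z" "\<forall>\<alpha>. st_le (X \<alpha>) Z"
  shows "\<exists>Y. positive_law Y \<and> finite_pth_moment p Y \<and> (\<forall>\<alpha>. icx_le (X \<alpha>) Y)"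
proof -
  interpret Zp: prob_space Z using Z(1) by (simp add: real_law_def)
  have sZ: "sets Z = sets borel" using Z(1) by (simp add: real_law_def)
  have mb: "(\<lambda>x::real. max x 0) \<in> borel_measurable borel" by measurable
  have m: "(\<lambda>x::real. max x 0) \<in> measurable Z borel"
    using mb measurable_cong_sets[OF sZ refl] by blast
  define Y where "Y = distr Z borel (\<lambda>x. max x 0)"
  have sY: "sets Y = sets borel" by (simp add: Y_def)
  have rY: "real_law Y"
    unfolding real_law_def using Zp.prob_space_distr[OF m] sY by (simp add: Y_def)
  have AEY: "AE x in Y. 0 \<le> x"
    unfolding Y_def by (subst AE_distr_iff[OF m]) auto
  have pY: "positive_law Y" using rY AEY by (simp add: positive_law_def)
  have "(\<integral>\<^sup>+ x. ennreal (\<bar>x\<bar> powr p) \<partial>Y) = (\<integral>\<^sup>+ x. ennreal (\<bar>max x 0\<bar> powr p) \<partial>Z)"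
    unfolding Y_def by (rule nn_integral_distr[OF m]) measurable
  also have "\<dots> \<le> (\<integral>\<^sup>+ x. ennreal (\<bar>x\<bar> powr p) \<partial>Z)"
    by (intro nn_integral_mono ennreal_leI powr_mono2 p) auto
  finally have fY: "finite_pth_moment p Y" using Z(2) by (simp add: finite_pth_moment_def)
  have icx: "icx_le (X \<alpha>) Y" for \<alpha>
    unfolding icx_le_def
  proof (intro allI impI)
    fix \<phi> :: "real \<Rightarrow> real"
    assume ph: "mono_on {0..} \<phi> \<and> convex_on {0..} \<phi> \<and> (\<forall>x\<ge>0. 0 \<le> \<phi> x)"
    define \<psi> where "\<psi> x = \<phi> (max x 0)" for x
    have mono: "mono \<psi>"
      unfolding \<psi>_def by (intro monoI mono_onD[of "{0..}" \<phi>]) (use ph in auto)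
    have nn: "0 \<le> \<psi> x" for x unfolding \<psi>_def using ph by simp
    have rX: "real_law (X \<alpha>)" and AEX: "AE x in X \<alpha>. 0 \<le> x" using X[of \<alpha>] by (simp_all add: positive_law_def)
    have "(\<integral>\<^sup>+ x. ennreal (\<phi> x) \<partial>X \<alpha>) = (\<integral>\<^sup>+ x. ennreal (\<psi> x) \<partial>X \<alpha>)"
      by (rule nn_integral_cong_AE) (use AEX in \<open>auto simp: \<psi>_def\<close>)
    also have "\<dots> \<le> (\<integral>\<^sup>+ x. ennreal (\<psi> x) \<partial>Z)"
      by (rule st_le_nn_integral[OF rX Z(1) _ mono nn]) (use Z(3) in blast)
    also have "\<dots> = (\<integral>\<^sup>+ x. ennreal (\<psi> (max x 0)) \<partial>Z)"
      by (simp add: \<psi>_def)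
    also have "\<dots> = (\<integral>\<^sup>+ x. ennreal (\<psi> x) \<partial>Y)"
    proof -
      have "\<psi> \<in> borel_measurable borel" by (rule borel_measurable_mono[OF mono])
      then have "(\<lambda>x. ennreal (\<psi> x)) \<in> borel_measurable borel" by measurable
      moreover have "(\<lambda>x. ennreal (\<psi> x)) \<in> borel_measurable (distr Z borel (\<lambda>x. max x 0))"
        using calculation measurable_cong_sets[OF sets_distr[of Z borel "\<lambda>x. max x 0"] refl, of borel] by simp
      ultimately show ?thesis unfolding Y_def using nn_integral_distr[OF m, of "\<lambda>x. ennreal (\<psi> x)"] by simp
    qed
    also have "\<dots> = (\<integral>\<^sup>+ x. ennreal (\<phi> x) \<partial>Y)"
      by (rule nn_integral_cong_AE) (use AEY in \<open>auto simp: \<psi>_def\<close>)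
    finally show "(\<integral>\<^sup>+ x. ennreal (\<phi> x) \<partial>X \<alpha>) \<le> (\<integral>\<^sup>+ x. ennreal (\<phi> x) \<partial>Y)" .
  qed
  show ?thesis using pY fY icx by blast
qed


lemma powr_pow_swap: "(2 powr (q::real)) ^ n = (2 ^ n :: real) powr q"
proof -
  have "(2 powr q) ^ n = (2::real) powr (real n * q)" by (rule powr_power) simp
  also have "\<dots> = ((2::real) powr real n) powr q" by (simp add: powr_powr)
  also have "\<dots> = (2 ^ n) powr q" by (simp add: powr_realpow)
  finally show ?thesis .
qed

lemma geom_real:
  fixes r x :: real and K :: nat
  assumes "r > 1" "x \<ge> 0"
  shows "(\<Sum>k<K. r ^ k * max (x - 2 ^ k) 0) \<le> x * r ^ K / (r - 1)"
proof -
  have "(\<Sum>k<K. r ^ k * max (x - 2 ^ k) 0) \<le> (\<Sum>k<K. r ^ k * x)"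
    using assms by (intro sum_mono mult_left_mono) auto
  also have "\<dots> = x * (\<Sum>k<K. r ^ k)" by (simp add: sum_distrib_left mult.commute)
  also have "\<dots> = x * ((r ^ K - 1) / (r - 1))"
    using assms by (subst geometric_sum) auto
  also have "\<dots> \<le> x * (r ^ K / (r - 1))"
    using assms by (intro mult_left_mono divide_right_mono) auto
  finally show ?thesis by simp
qed

lemma geom_bound:
  fixes p x :: real
  assumes p: "p > 1"
  shows "(\<Sum>k. ennreal ((2 powr (p-1)) ^ k * max (x - 2 ^ k) 0))
          \<le> ennreal (2 powr (p-1) / (2 powr (p-1) - 1) * \<bar>x\<bar> powr p)"
proof -
  define r where "r = (2::real) powr (p-1)"
  have r1: "r > 1" unfolding r_def using p by simp
  show ?thesis
  proof (cases "x \<le> 1")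
    case True
    have "2 ^ k \<ge> x" for k :: nat using True by (smt (verit) one_le_power)
    then have "(\<lambda>k. ennreal ((2 powr (p-1)) ^ k * max (x - 2 ^ k) 0)) = (\<lambda>_. 0)"
      by (auto simp: fun_eq_iff max_def)
    then show ?thesis by simp
  next
    case False
    then have x1: "x > 1" by simp
    obtain n :: nat where "x < 2 ^ n" using real_arch_pow[of 2 x] by auto
    define K where "K = (LEAST n. x \<le> (2::real) ^ n)"
    have xK: "x \<le> 2 ^ K" unfolding K_def by (rule LeastI[of _ n]) (use \<open>x < 2 ^ n\<close> in simp)
    have K0: "K \<noteq> 0"
    proof
      assume "K = 0" with xK x1 show False by simp
    qed
    then obtain J where KJ: "K = Suc J" by (cases K) auto
    have xJ: "2 ^ J < x"
    proof (rule ccontr)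
      assume "\<not> 2 ^ J < x"
      then have "K \<le> J" unfolding K_def by (intro Least_le) simp
      then show False using KJ by simp
    qed
    have zero: "ennreal (r ^ k * max (x - 2 ^ k) 0) = 0" if "k \<notin> {..<K}" for k
    proof -
      have "(2::real) ^ K \<le> 2 ^ k" using that by (intro power_increasing) auto
      then have "x \<le> 2 ^ k" using xK by linarith
      then show ?thesis by (simp add: max_def)
    qed
    have "(\<Sum>k. ennreal (r ^ k * max (x - 2 ^ k) 0)) = (\<Sum>k<K. ennreal (r ^ k * max (x - 2 ^ k) 0))"
      by (rule suminf_finite) (use zero in auto)
    also have "\<dots> = ennreal (\<Sum>k<K. r ^ k * max (x - 2 ^ k) 0)"
      using r1 by (intro sum_ennreal) auto
    also have "\<dots> \<le> ennreal (x * r ^ K / (r - 1))"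
      using geom_real[OF r1, of x K] x1 by (intro ennreal_leI) auto
    also have "\<dots> \<le> ennreal (r / (r - 1) * \<bar>x\<bar> powr p)"
    proof (intro ennreal_leI)
      have "r ^ J = (2 ^ J) powr (p - 1)" unfolding r_def by (rule powr_pow_swap)
      also have "\<dots> \<le> x powr (p - 1)" using xJ p by (intro powr_mono2) auto
      finally have rJ: "r ^ J \<le> x powr (p - 1)" .
      have "x * r ^ K = r * (x * r ^ J)" by (simp add: KJ)
      also have "\<dots> \<le> r * (x * x powr (p - 1))"
        using rJ r1 x1 by (intro mult_left_mono) auto
      also have "x * x powr (p - 1) = x powr p"
      proof -
        have "x powr p = x powr (1 + (p - 1))" by simp
        also have "\<dots> = x powr 1 * x powr (p - 1)" by (rule powr_add)
        also have "\<dots> = x * x powr (p - 1)" using x1 by simp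
        finally show ?thesis by simp
      qed
      finally have "x * r ^ K \<le> r * \<bar>x\<bar> powr p" using x1 by simp
      then show "x * r ^ K / (r - 1) \<le> r / (r - 1) * \<bar>x\<bar> powr p"
        using r1 by (simp add: divide_right_mono)
    qed
    finally show ?thesis unfolding r_def .
  qed
qed


lemma dir_icx_st:
  fixes X :: "'i \<Rightarrow> real measure"
  assumes p: "p > 1" and X: "\<And>\<alpha>. positive_law (X \<alpha>)"
    and Y: "positive_law Y" "finite_pth_moment p Y" "\<forall>\<alpha>. icx_le (X \<alpha>) Y"
  shows "\<exists>Z. real_law Z \<and> finite_pth_moment p Z \<and> (\<forall>\<alpha>. st_le (X \<alpha>) Z)"
proof -
  interpret Yp: prob_space Y using Y(1) by (simp add: positive_law_def real_law_def)
  have sY: "sets Y = sets borel" using Y(1) by (simp add: positive_law_def real_law_def)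
  define r where "r = (2::real) powr (p-1)"
  have r1: "r > 1" unfolding r_def using p by simp
  define \<pi> where "\<pi> k = (\<integral>\<^sup>+ x. ennreal (max (x - 2^k) 0) \<partial>Y)" for k :: nat
  have sumfin: "(\<Sum>k. ennreal (r^k) * \<pi> k) < \<infinity>"
  proof -
    have mk: "(\<lambda>x. ennreal (r ^ k * max (x - 2 ^ k) 0)) \<in> borel_measurable Y" for k
    proof -
      have "(\<lambda>x::real. ennreal (r ^ k * max (x - 2 ^ k) 0)) \<in> borel_measurable borel" by measurable
      then show ?thesis by (simp add: measurable_cong_sets[OF sY refl])
    qed
    have "(\<Sum>k. ennreal (r^k) * \<pi> k) = (\<Sum>k. \<integral>\<^sup>+ x. ennreal (r ^ k * max (x - 2 ^ k) 0) \<partial>Y)"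
    proof (intro suminf_cong)
      fix k :: nat
      have m: "(\<lambda>x. ennreal (max (x - 2^k) 0)) \<in> borel_measurable Y"
      proof -
        have "(\<lambda>x::real. ennreal (max (x - 2 ^ k) 0)) \<in> borel_measurable borel" by measurable
        then show ?thesis by (simp add: measurable_cong_sets[OF sY refl])
      qed
      have "(\<integral>\<^sup>+ x. ennreal (r ^ k * max (x - 2 ^ k) 0) \<partial>Y) = (\<integral>\<^sup>+ x. ennreal (r ^ k) * ennreal (max (x - 2 ^ k) 0) \<partial>Y)"
        using r1 by (intro nn_integral_cong) (subst ennreal_mult, auto)
      also have "\<dots> = ennreal (r ^ k) * \<pi> k" unfolding \<pi>_def by (rule nn_integral_cmult[OF m])
      finally show "ennreal (r^k) * \<pi> k = (\<integral>\<^sup>+ x. ennreal (r ^ k * max (x - 2 ^ k) 0) \<partial>Y)" by simp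
    qed
    also have "\<dots> = (\<integral>\<^sup>+ x. (\<Sum>k. ennreal (r ^ k * max (x - 2 ^ k) 0)) \<partial>Y)"
      by (rule nn_integral_suminf[symmetric]) (rule mk)
    also have "\<dots> \<le> (\<integral>\<^sup>+ x. ennreal (r / (r - 1) * \<bar>x\<bar> powr p) \<partial>Y)"
      by (intro nn_integral_mono) (use geom_bound[OF p] in \<open>simp add: r_def\<close>)
    also have "\<dots> = ennreal (r / (r - 1)) * (\<integral>\<^sup>+ x. ennreal (\<bar>x\<bar> powr p) \<partial>Y)"
    proof -
      have m: "(\<lambda>x. ennreal (\<bar>x\<bar> powr p)) \<in> borel_measurable Y"
      proof -
        have "(\<lambda>x::real. ennreal (\<bar>x\<bar> powr p)) \<in> borel_measurable borel" by measurable
        then show ?thesis by (simp add: measurable_cong_sets[OF sY refl])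
      qed
      have "(\<integral>\<^sup>+ x. ennreal (r / (r - 1) * \<bar>x\<bar> powr p) \<partial>Y) = (\<integral>\<^sup>+ x. ennreal (r / (r - 1)) * ennreal (\<bar>x\<bar> powr p) \<partial>Y)"
        using r1 by (intro nn_integral_cong) (subst ennreal_mult, auto)
      also have "\<dots> = ennreal (r / (r - 1)) * (\<integral>\<^sup>+ x. ennreal (\<bar>x\<bar> powr p) \<partial>Y)" by (rule nn_integral_cmult[OF m])
      finally show ?thesis .
    qed
    also have "\<dots> < \<infinity>" using Y(2) by (simp add: finite_pth_moment_def ennreal_mult_less_top)
    finally show ?thesis .
  qed
  have \<pi>fin: "\<pi> k < \<infinity>" for k
  proof -
    have "ennreal (r^k) * \<pi> k < \<infinity>" using sumfin by (rule ennreal_suminf_lessD)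
    then show ?thesis using r1 by (auto simp: ennreal_mult_less_top)
  qed
  define \<pi>r where "\<pi>r k = enn2real (\<pi> k)" for k
  have \<pi>eq: "\<pi> k = ennreal (\<pi>r k)" for k unfolding \<pi>r_def using \<pi>fin[of k] by simp
  have \<pi>r0: "0 \<le> \<pi>r k" for k unfolding \<pi>r_def by simp
  define a where "a k = r^k * \<pi>r k" for k
  have a0: "0 \<le> a k" for k unfolding a_def using r1 \<pi>r0 by simp
  have suma: "summable a"
  proof (rule summable_suminf_not_top)
    show "0 \<le> a k" for k by (rule a0)
    have "(\<Sum>k. ennreal (a k)) = (\<Sum>k. ennreal (r^k) * \<pi> k)"
      unfolding a_def \<pi>eq using r1 \<pi>r0 by (simp add: ennreal_mult)
    then show "(\<Sum>k. ennreal (a k)) \<noteq> \<top>" using sumfin by simp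
  qed
  define w where "w k = \<pi>r k / 2^k" for k
  have w0: "0 \<le> w k" for k unfolding w_def using \<pi>r0 by simp
  have tail: "measure (X \<alpha>) {t<..} \<le> w k" if tk: "2^(k+1) \<le> t" for \<alpha> k t
  proof -
    interpret Xp: prob_space "X \<alpha>" using X[of \<alpha>] by (simp add: positive_law_def real_law_def)
    have sX: "sets (X \<alpha>) = sets borel" using X[of \<alpha>] by (simp add: positive_law_def real_law_def)
    have Am: "{(2::real)^(k+1)<..} \<in> sets (X \<alpha>)" using sX by simp
    have "ennreal (2^k) * emeasure (X \<alpha>) {2^(k+1)<..} = (\<integral>\<^sup>+ x. ennreal (2^k) * indicator {2^(k+1)<..} x \<partial>X \<alpha>)"
      by (rule nn_integral_cmult_indicator[OF Am, symmetric])
    also have "\<dots> \<le> (\<integral>\<^sup>+ x. ennreal (max (x - 2^k) 0) \<partial>X \<alpha>)"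
    proof (intro nn_integral_mono)
      fix x :: real
      show "ennreal (2^k) * indicator {2^(k+1)<..} x \<le> ennreal (max (x - 2^k) 0)"
      proof (cases "x \<in> {(2::real)^(k+1)<..}")
        case True
        then have "2^k \<le> max (x - 2^k) 0" by simp
        then show ?thesis using True by (simp add: ennreal_leI)
      qed simp
    qed
    also have "\<dots> \<le> \<pi> k"
    proof -
      have "mono_on {0..} (\<lambda>x::real. max (x - 2^k) 0)" by (intro mono_onI) auto
      moreover have "convex_on {0..} (\<lambda>x::real. max (x - 2^k) 0)"
      proof (rule convex_onI)
        show "convex {0::real..}" by simp
        fix t x y :: real assume t: "0 < t" "t < 1"
        show "max ((1 - t) *\<^sub>R x + t *\<^sub>R y - 2^k) 0 \<le> (1 - t) * max (x - 2^k) 0 + t * max (y - 2^k) 0"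
        proof -
          have "(1 - t) *\<^sub>R x + t *\<^sub>R y - 2^k = (1 - t) * (x - 2^k) + t * (y - 2^k)" by (simp add: algebra_simps)
          also have "\<dots> \<le> (1 - t) * max (x - 2^k) 0 + t * max (y - 2^k) 0"
            using t by (intro add_mono mult_left_mono) auto
          finally show ?thesis using t by simp
        qed
      qed
      moreover have "\<forall>x\<ge>0. 0 \<le> max (x - 2^k) (0::real)" by simp
      ultimately show ?thesis using Y(3) unfolding icx_le_def \<pi>_def by blast
    qed
    finally have "ennreal (2^k) * emeasure (X \<alpha>) {2^(k+1)<..} \<le> ennreal (\<pi>r k)" by (simp add: \<pi>eq)
    then have "ennreal (2^k * measure (X \<alpha>) {2^(k+1)<..}) \<le> ennreal (\<pi>r k)"
      by (simp add: Xp.emeasure_eq_measure ennreal_mult)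
    then have "2^k * measure (X \<alpha>) {2^(k+1)<..} \<le> \<pi>r k"
      using \<pi>r0 by (simp add: ennreal_le_iff)
    then have "measure (X \<alpha>) {2^(k+1)<..} \<le> w k"
      unfolding w_def by (simp add: field_simps)
    moreover have "measure (X \<alpha>) {t<..} \<le> measure (X \<alpha>) {2^(k+1)<..}"
      using tk Am by (intro Xp.finite_measure_mono) auto
    ultimately show ?thesis by linarith
  qed
  have w_le_a: "w k \<le> a k" for k
  proof -
    have "w k \<le> \<pi>r k" unfolding w_def using \<pi>r0[of k]
      by (simp add: divide_le_eq mult_le_cancel_left1 one_le_power)
    also have "\<dots> \<le> a k" unfolding a_def using \<pi>r0[of k] r1
      by (simp add: mult_le_cancel_right1 one_le_power)
    finally show ?thesis .
  qed
  have sumw: "summable w"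
    by (rule summable_comparison_test[OF _ suma]) (use w0 w_le_a in auto)
  obtain N where N: "norm (\<Sum>j. w (j + N)) < 1"
    using suminf_exist_split[OF _ sumw, of 1] by auto
  define S where "S = (\<Sum>j. w (j + N))"
  have sumwN: "summable (\<lambda>j. w (j + N))" using sumw by (rule summable_ignore_initial_segment)
  have S0: "0 \<le> S" unfolding S_def using w0 by (intro suminf_nonneg sumwN) auto
  have S1: "S < 1" using N S0 by (simp add: S_def)
  define f where "f k = (case k of 0 \<Rightarrow> 1 - S | Suc j \<Rightarrow> w (j + N))" for k
  have f0: "0 \<le> f k" for k using S1 w0 by (cases k) (auto simp: f_def)
  have fsums: "f sums 1"
  proof -
    have "(\<lambda>j. f (Suc j)) sums S" unfolding f_def S_def using sumwN by (simp add: summable_sums)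
    then have "f sums (S + f 0)" by (simp add: sums_Suc_iff)
    then show ?thesis by (simp add: f_def)
  qed
  have fint: "(\<integral>\<^sup>+ x. ennreal (f x) \<partial>count_space UNIV) = 1"
    using fsums f0 by (simp add: nn_integral_count_space_nat suminf_ennreal2 sums_summable sums_unique[symmetric])
  define Q where "Q = embed_pmf f"
  have pmfQ: "pmf Q k = f k" for k unfolding Q_def by (rule pmf_embed_pmf[OF f0 fint])
  define v where "v k = (2::real) ^ (N + k + 1)" for k
  have vm: "v \<in> measurable (measure_pmf Q) borel" by simp
  define Z where "Z = distr (measure_pmf Q) borel v"
  have rZ: "real_law Z"
    unfolding real_law_def Z_def by (simp add: measure_pmf.prob_space_distr[OF vm])
  have key_id: "w k * (2 ^ (k + 2)) powr p = 4 powr p * a k" for k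
  proof -
    have "(2 ^ (k + 2) :: real) powr p = (4 * 2 ^ k) powr p" by (simp add: power_add)
    also have "\<dots> = 4 powr p * (2 ^ k) powr p" by (simp add: powr_mult)
    also have "(2 ^ k :: real) powr p = 2 ^ k * (2 ^ k) powr (p - 1)"
    proof -
      have "(2 ^ k :: real) powr p = (2 ^ k) powr (1 + (p - 1))" by simp
      also have "\<dots> = (2 ^ k) powr 1 * (2 ^ k) powr (p - 1)" by (rule powr_add)
      finally show ?thesis by simp
    qed
    also have "(2 ^ k :: real) powr (p - 1) = r ^ k" unfolding r_def by (rule powr_pow_swap[symmetric])
    finally show ?thesis unfolding w_def a_def by (simp add: field_simps)
  qed
  have fZ: "finite_pth_moment p Z"
  proof -
    have summ: "summable (\<lambda>k. f k * v k powr p)"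
    proof -
      have eq: "(\<lambda>j. f (Suc j) * v (Suc j) powr p) = (\<lambda>j. 4 powr p * a (j + N))"
        using key_id by (auto simp: f_def v_def fun_eq_iff add.commute add.left_commute)
      have "summable (\<lambda>j. 4 powr p * a (j + N))"
        by (intro summable_mult summable_ignore_initial_segment suma)
      then have "summable (\<lambda>j. f (Suc j) * v (Suc j) powr p)" by (simp only: eq)
      then show ?thesis using summable_Suc_iff[of "\<lambda>k. f k * v k powr p"] by simp
    qed
    have "(\<integral>\<^sup>+ x. ennreal (\<bar>x\<bar> powr p) \<partial>Z) = (\<integral>\<^sup>+ k. ennreal (\<bar>v k\<bar> powr p) \<partial>measure_pmf Q)"
      unfolding Z_def by (rule nn_integral_distr[OF vm]) measurable
    also have "\<dots> = (\<integral>\<^sup>+ k. ennreal (pmf Q k) * ennreal (\<bar>v k\<bar> powr p) \<partial>count_space UNIV)"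
      by (rule nn_integral_measure_pmf)
    also have "\<dots> = (\<Sum>k. ennreal (f k * v k powr p))"
      by (simp add: nn_integral_count_space_nat pmfQ v_def ennreal_mult f0)
    also have "\<dots> = ennreal (\<Sum>k. f k * v k powr p)"
      using summ f0 by (intro suminf_ennreal2) (auto simp: v_def)
    finally show ?thesis unfolding finite_pth_moment_def by simp
  qed
  have st: "st_le (X \<alpha>) Z" for \<alpha>
    unfolding st_le_def
  proof
    fix t :: real
    interpret Xp: prob_space "X \<alpha>" using X[of \<alpha>] by (simp add: positive_law_def real_law_def)
    have mZ: "measure Z {t<..} = measure (measure_pmf Q) {k. t < v k}"
      unfolding Z_def by (subst measure_distr[OF vm]) (auto simp: vimage_def)
    show "measure (X \<alpha>) {t<..} \<le> measure Z {t<..}"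
    proof (cases "t < 2 ^ (N + 1)")
      case True
      have "v k \<ge> 2 ^ (N + 1)" for k unfolding v_def by (intro power_increasing) auto
      then have "{k. t < v k} = UNIV" using True by (auto intro: less_le_trans)
      then show ?thesis unfolding mZ by (simp add: Xp.prob_le_1)
    next
      case False
      obtain n :: nat where n: "t < 2 ^ n" using real_arch_pow[of 2 t] by auto
      define m where "m = (LEAST n. t < (2::real) ^ (N + n + 1))"
      have tm: "t < 2 ^ (N + m + 1)" unfolding m_def
        by (rule LeastI[of _ n]) (use n in \<open>smt (verit) le_add2 one_le_numeral power_increasing add.commute\<close>)
      have m0: "m \<noteq> 0" using tm False by (intro notI) simp
      then obtain j where mj: "m = Suc j" by (cases m) auto
      have tj: "2 ^ (N + j + 1) \<le> t"
      proof (rule ccontr)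
        assume "\<not> 2 ^ (N + j + 1) \<le> t"
        then have "m \<le> j" unfolding m_def by (intro Least_le) simp
        then show False using mj by simp
      qed
      have "measure (X \<alpha>) {t<..} \<le> w (j + N)"
        by (rule tail) (use tj in \<open>simp add: add.commute add.left_commute\<close>)
      also have "\<dots> = measure (measure_pmf Q) {Suc j}"
        by (simp add: measure_pmf_single pmfQ f_def)
      also have "\<dots> \<le> measure (measure_pmf Q) {k. t < v k}"
        using tm mj by (intro measure_pmf.finite_measure_mono) (auto simp: v_def)
      finally show ?thesis unfolding mZ .
    qed
  qed
  show ?thesis using rZ fZ st by blast
qed


theorem mainTheorem3:
  fixes p :: real and X :: "'i \<Rightarrow> real measure"
  assumes "p > 1"
    and "\<And>\<alpha>. positive_law (X \<alpha>)"
  shows "(\<exists>Y. positive_law Y \<and> finite_pth_moment p Y \<and> (\<forall>\<alpha>. icx_le (X \<alpha>) Y))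
     \<longleftrightarrow> (\<exists>Z. real_law Z \<and> finite_pth_moment p Z \<and> (\<forall>\<alpha>. st_le (X \<alpha>) Z))"
proof
  assume "\<exists>Y. positive_law Y \<and> finite_pth_moment p Y \<and> (\<forall>\<alpha>. icx_le (X \<alpha>) Y)"
  then obtain Y where "positive_law Y" "finite_pth_moment p Y" "\<forall>\<alpha>. icx_le (X \<alpha>) Y" by blast
  then show "\<exists>Z. real_law Z \<and> finite_pth_moment p Z \<and> (\<forall>\<alpha>. st_le (X \<alpha>) Z)"
    using dir_icx_st[of p X Y] assms by blast
next
  assume "\<exists>Z. real_law Z \<and> finite_pth_moment p Z \<and> (\<forall>\<alpha>. st_le (X \<alpha>) Z)"
  then obtain Z where "real_law Z" "finite_pth_moment p Z" "\<forall>\<alpha>. st_le (X \<alpha>) Z" by blast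
  moreover have "p \<ge> 0" using assms(1) by simp
  ultimately show "\<exists>Y. positive_law Y \<and> finite_pth_moment p Y \<and> (\<forall>\<alpha>. icx_le (X \<alpha>) Y)"
    using dir_st_icx[of p X Z] assms(2) by blast
qed

end
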